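(* Let $r:\mathbb X\to[0,1)$ and $\alpha=\frac{r}{1-r}:\mathbb X\to[0,\infty)$. Suppose that, for all $x\in\mathbb X$, \[ |z(x)|\prod_{\substack{X\Subset\mathbb X:\\ x\in X}}\max\Big\{|W(X)|,\ 1+|W(X)-1|\,\alpha^S \ \Big|\ \varnothing\neq S\subset X\setminus\{x\}\Big\}\le r(x). \] Then for every $\Lambda\Subset\mathbb X$ one has $Z(\Lambda)\neq 0$, and $\sup_{\Lambda\Subset\mathbb X\setminus\{x\}}|\widehat z(x,\Lambda)|\le r(x)<1$ for all $x\in\mathbb X$. Moreover, for all $\Lambda\Subset\mathbb X$, \[ 0<(1-r)^\Lambda\le|Z(\Lambda)|\le(1+r)^\Lambda . \]
   Context: $\mathbb X$ is a finite or countably infinite set; $X\Subset\mathbb X$ means $X$ is a finite subset of $\mathbb X$, and $\mathbf F$ denotes the set of finite subsets of $\mathbb X$. Fix an activity $z:\mathbb X\to\mathbb C$ and an interaction $W:\mathbf F\to\mathbb C$; write $W(x)=W(\{x\})$. For a function $f$ on $\mathbb X$ and $X\Subset\mathbb X$ write $f^X=\prod_{x\in X}f(x)$ (empty products equal $1$); e.g. $(1-r)^\Lambda=\prod_{x\in\Lambda}(1-r(x))$. The Boltzmann factor is $\kappa(X)=\prod_{S\subset X,\,S\neq\varnothing}W(S)$. For $\Lambda\Subset\mathbb X$ the partition function is $Z(\Lambda)=\sum_{X\subset\Lambda}z^X\kappa(X)$; for $x\in\mathbb X\setminus\Lambda$ the pinned partition function is $Z(x,\Lambda)=\sum_{Y\subset\Lambda}z^{\{x\}\cup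 Y}\kappa(\{x\}\cup Y)$ and, when $Z(\Lambda)\neq0$, the effective activity is $\widehat z(x,\Lambda)=Z(x,\Lambda)/Z(\Lambda)$. In the displayed maximum, the max is taken over $|W(X)|$ together with all numbers $1+|W(X)-1|\alpha^S$ for nonempty $S\subset X\setminus\{x\}$ (so for $X=\{x\}$ the factor is $|W(x)|$). The product over all finite $X\ni x$ is a product of nonnegative numbers, understood in $[0,\infty]$. *)

theory Defs
  imports "HOL-Analysis.Analysis" "HOL-Library.Countable"
begin

definition kappa :: "('a set \<Rightarrow> complex) \<Rightarrow> 'a set \<Rightarrow> complex" where
  "kappa W X = (\<Prod>S\<in>Pow X - {{}}. W S)"

definition Zpart :: "('a \<Rightarrow> complex) \<Rightarrow> ('a set \<Rightarrow> complex) \<Rightarrow> 'a set \<Rightarrow> complex" where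
  "Zpart z W \<Lambda> = (\<Sum>X\<in>Pow \<Lambda>. (\<Prod>y\<in>X. z y) * kappa W X)"

definition Zpinned :: "('a \<Rightarrow> complex) \<Rightarrow> ('a set \<Rightarrow> complex) \<Rightarrow> 'a \<Rightarrow> 'a set \<Rightarrow> complex" where
  "Zpinned z W x \<Lambda> = (\<Sum>Y\<in>Pow \<Lambda>. (\<Prod>y\<in>insert x Y. z y) * kappa W (insert x Y))"

definition eff_act :: "('a \<Rightarrow> complex) \<Rightarrow> ('a set \<Rightarrow> complex) \<Rightarrow> 'a \<Rightarrow> 'a set \<Rightarrow> complex" where
  "eff_act z W x \<Lambda> = Zpinned z W x \<Lambda> / Zpart z W \<Lambda>"

definition max_factor :: "('a set \<Rightarrow> complex) \<Rightarrow> ('a \<Rightarrow> real) \<Rightarrow> 'a \<Rightarrow> 'a set \<Rightarrow> real" where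
  "max_factor W \<alpha> x X =
     Max ({cmod (W X)} \<union> {1 + cmod (W X - 1) * (\<Prod>s\<in>S. \<alpha> s) | S. S \<noteq> {} \<and> S \<subseteq> X - {x}})"

definition ennprod :: "('b \<Rightarrow> ennreal) \<Rightarrow> 'b set \<Rightarrow> ennreal" where
  "ennprod f A = Lim (finite_subsets_at_top A) (\<lambda>F. \<Prod>b\<in>F. f b)"

end

theory Submission
  imports Defs
begin

lemma mf_set_finite:
  assumes "finite X"
  shows "finite ({cmod (W X)} \<union> {1 + cmod (W X - 1) * (\<Prod>s\<in>S. \<alpha> s) | S. S \<noteq> {} \<and> S \<subseteq> X - {x}})"
proof -
  have "{1 + cmod (W X - 1) * (\<Prod>s\<in>S. \<alpha> s) | S. S \<noteq> {} \<and> S \<subseteq> X - {x}}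
        \<subseteq> (\<lambda>S. 1 + cmod (W X - 1) * (\<Prod>s\<in>S. \<alpha> s)) ` Pow X" by auto
  then show ?thesis using assms by (meson finite_Pow_iff finite_Un finite_imageI finite.emptyI finite.insertI finite_subset)
qed

lemma mf_ge_W: "finite X \<Longrightarrow> cmod (W X) \<le> max_factor W \<alpha> x X"
  unfolding max_factor_def by (rule Max_ge[OF mf_set_finite]) auto

lemma mf_nonneg: "finite X \<Longrightarrow> 0 \<le> max_factor W \<alpha> x X"
  using mf_ge_W[of X W \<alpha> x] norm_ge_zero[of "W X"] by linarith

lemma mf_ge_S: "finite X \<Longrightarrow> S \<noteq> {} \<Longrightarrow> S \<subseteq> X - {x} \<Longrightarrow>
   1 + cmod (W X - 1) * (\<Prod>s\<in>S. \<alpha> s) \<le> max_factor W \<alpha> x X"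
  unfolding max_factor_def by (rule Max_ge[OF mf_set_finite]) auto

lemma mf_ge_1: assumes "finite X" "\<And>s. 0 \<le> \<alpha> s" "X - {x} \<noteq> {}"
  shows "1 \<le> max_factor W \<alpha> x X"
proof -
  have "1 \<le> 1 + cmod (W X - 1) * (\<Prod>s\<in>X - {x}. \<alpha> s)"
    using assms(2) by (simp add: prod_nonneg)
  also have "\<dots> \<le> max_factor W \<alpha> x X" by (rule mf_ge_S) (use assms in auto)
  finally show ?thesis .
qed

lemma mf_singleton: "max_factor W \<alpha> x {x} = cmod (W {x})"
  unfolding max_factor_def by auto

lemma mf_le: assumes "finite X" "cmod (W X) \<le> M"
  "\<And>S. S \<noteq> {} \<Longrightarrow> S \<subseteq> X - {x} \<Longrightarrow> 1 + cmod (W X - 1) * (\<Prod>s\<in>S. \<alpha> s) \<le> M"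
  shows "max_factor W \<alpha> x X \<le> M"
  unfolding max_factor_def
  by (rule Max.boundedI[OF mf_set_finite[OF assms(1)]]) (use assms in auto)

lemma mf_mult:
  assumes fin: "finite T" and al: "\<And>s. 0 \<le> \<alpha> s" and W': "W' T = W T * W (insert x T)"
  shows "max_factor W' \<alpha> y T \<le> max_factor W \<alpha> y T * max_factor W \<alpha> y (insert x T)"
proof (rule mf_le[OF fin])
  let ?A = "max_factor W \<alpha> y T" and ?B = "max_factor W \<alpha> y (insert x T)"
  have A0: "cmod (W T) \<le> ?A" by (rule mf_ge_W[OF fin])
  have B0: "cmod (W (insert x T)) \<le> ?B" by (rule mf_ge_W) (use fin in auto)
  show "cmod (W' T) \<le> ?A * ?B" unfolding W' norm_mult
    by (rule mult_mono[OF A0 B0]) (use mf_nonneg fin in auto)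
  fix S assume S: "S \<noteq> {}" "S \<subseteq> T - {y}"
  define c where "c = (\<Prod>s\<in>S. \<alpha> s)"
  have c0: "0 \<le> c" unfolding c_def using al by (simp add: prod_nonneg)
  have A1: "1 + cmod (W T - 1) * c \<le> ?A" unfolding c_def by (rule mf_ge_S[OF fin S])
  have B1: "1 + cmod (W (insert x T) - 1) * c \<le> ?B" unfolding c_def by (rule mf_ge_S) (use fin S in auto)
  have tri: "cmod (W' T - 1) \<le> cmod (W T - 1) + cmod (W T) * cmod (W (insert x T) - 1)"
  proof -
    have "W' T - 1 = (W T - 1) + W T * (W (insert x T) - 1)" unfolding W' by (simp add: algebra_simps)
    then show ?thesis by (metis norm_mult norm_triangle_ineq)
  qed
  have "1 + cmod (W' T - 1) * c \<le> 1 + cmod (W T - 1) * c + cmod (W T) * cmod (W (insert x T) - 1) * c"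
    using mult_right_mono[OF tri c0] by (simp add: algebra_simps)
  also have "\<dots> \<le> ?A + ?A * (cmod (W (insert x T) - 1) * c)"
    using A1 mult_right_mono[OF A0, of "cmod (W (insert x T) - 1) * c"] c0
    by (simp add: algebra_simps)
  also have "\<dots> = ?A * (1 + cmod (W (insert x T) - 1) * c)" by (simp add: algebra_simps)
  also have "\<dots> \<le> ?A * ?B" by (rule mult_left_mono[OF B1 mf_nonneg[OF fin]])
  finally show "1 + cmod (W' T - 1) * (\<Prod>s\<in>S. \<alpha> s) \<le> ?A * ?B" unfolding c_def .
qed


definition absW :: "'a \<Rightarrow> 'a set set \<Rightarrow> ('a set \<Rightarrow> complex) \<Rightarrow> 'a set \<Rightarrow> complex" where
  "absW x A W T = (if T \<in> A \<and> T \<noteq> {} then W T * W (insert x T) else W T)"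

definition Pp :: "('a \<Rightarrow> complex) \<Rightarrow> ('a set \<Rightarrow> complex) \<Rightarrow> 'a set \<Rightarrow> 'a set \<Rightarrow> complex" where
  "Pp z W \<Lambda> S = (\<Sum>Y\<in>{Y\<in>Pow \<Lambda>. S \<subseteq> Y}. (\<Prod>y\<in>Y. z y) * kappa W Y)"

lemma inj_insert: "inj_on (insert x) {T. x \<notin> T}"
  by (rule inj_onI) (metis Diff_insert_absorb mem_Collect_eq)

lemma inj_insert': "x \<notin> \<Lambda> \<Longrightarrow> inj_on (insert x) (Pow \<Lambda>)"
  by (rule inj_on_subset[OF inj_insert]) auto

lemma Pow_insert_disj: "x \<notin> \<Lambda> \<Longrightarrow> Pow \<Lambda> \<inter> insert x ` Pow \<Lambda> = {}"
  by auto

lemma Zpart_insert: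
  assumes "finite \<Lambda>" "x \<notin> \<Lambda>"
  shows "Zpart z W (insert x \<Lambda>) = Zpart z W \<Lambda> + Zpinned z W x \<Lambda>"
  unfolding Zpart_def Zpinned_def Pow_insert
  using assms
  by (subst sum.union_disjoint) (auto simp: sum.reindex[OF inj_insert'])

lemma Zpart_empty: "Zpart z W {} = 1"
  unfolding Zpart_def kappa_def by simp

lemma kappa_insert:
  assumes fin: "finite Y" and x: "x \<notin> Y" and A: "Pow Y \<subseteq> A"
  shows "kappa W (insert x Y) = W {x} * kappa (absW x A W) Y"
proof -
  have e: "Pow (insert x Y) - {{}} = (Pow Y - {{}}) \<union> insert x ` Pow Y" by (auto simp: Pow_insert)
  have d: "(Pow Y - {{}}) \<inter> insert x ` Pow Y = {}" using x by auto
  have "kappa W (insert x Y) = (\<Prod>T\<in>Pow Y - {{}}. W T) * (\<Prod>T\<in>insert x ` Pow Y. W T)"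
    unfolding kappa_def e using fin by (subst prod.union_disjoint[OF _ _ d]) auto
  also have "(\<Prod>T\<in>insert x ` Pow Y. W T) = (\<Prod>T\<in>Pow Y. W (insert x T))"
    using x by (simp add: prod.reindex[OF inj_insert'])
  also have "\<dots> = W {x} * (\<Prod>T\<in>Pow Y - {{}}. W (insert x T))"
  proof -
    have "Pow Y = insert {} (Pow Y - {{}})" by auto
    then show ?thesis using fin by (metis (no_types, lifting) finite_Diff finite_Pow_iff insert_absorb insert_iff prod.insert_remove)
  qed
  also have "(\<Prod>T\<in>Pow Y - {{}}. W T) * (W {x} * (\<Prod>T\<in>Pow Y - {{}}. W (insert x T)))
     = W {x} * (\<Prod>T\<in>Pow Y - {{}}. W T * W (insert x T))"
    by (simp add: prod.distrib)
  also have "(\<Prod>T\<in>Pow Y - {{}}. W T * W (insert x T)) = kappa (absW x A W) Y"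
    unfolding kappa_def absW_def using A by (intro prod.cong) auto
  finally show ?thesis .
qed

lemma Zpinned_abs:
  assumes fin: "finite \<Lambda>" and x: "x \<notin> \<Lambda>" and A: "Pow \<Lambda> \<subseteq> A"
  shows "Zpinned z W x \<Lambda> = z x * W {x} * Zpart z (absW x A W) \<Lambda>"
proof -
  have "Zpinned z W x \<Lambda> = (\<Sum>Y\<in>Pow \<Lambda>. z x * W {x} * ((\<Prod>y\<in>Y. z y) * kappa (absW x A W) Y))"
    unfolding Zpinned_def
  proof (rule sum.cong[OF refl])
    fix Y assume Y: "Y \<in> Pow \<Lambda>"
    then have fY: "finite Y" "x \<notin> Y" "Pow Y \<subseteq> A" using fin x A finite_subset by blast+
    show "(\<Prod>y\<in>insert x Y. z y) * kappa W (insert x Y) = z x * W {x} * ((\<Prod>y\<in>Y. z y) * kappa (absW x A W) Y)"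
      using kappa_insert[OF fY] fY by (simp add: algebra_simps)
  qed
  then show ?thesis unfolding Zpart_def by (simp add: sum_distrib_left)
qed

lemma Pp_empty: "Pp z W \<Lambda> {} = Zpart z W \<Lambda>"
  unfolding Pp_def Zpart_def by (rule sum.cong) auto

lemma Pp_insert:
  assumes fin: "finite \<Lambda>" and s: "s \<in> \<Lambda>" "s \<notin> S" and S: "S \<subseteq> \<Lambda>"
  shows "Pp z W \<Lambda> (insert s S) = z s * W {s} * Pp z (absW s (Pow (\<Lambda> - {s})) W) (\<Lambda> - {s}) S"
proof -
  have e: "{Y\<in>Pow \<Lambda>. insert s S \<subseteq> Y} = insert s ` {Y\<in>Pow (\<Lambda> - {s}). S \<subseteq> Y}"
  proof
    show "{Y\<in>Pow \<Lambda>. insert s S \<subseteq> Y} \<subseteq> insert s ` {Y\<in>Pow (\<Lambda> - {s}). S \<subseteq> Y}"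
    proof
      fix Y assume "Y \<in> {Y\<in>Pow \<Lambda>. insert s S \<subseteq> Y}"
      then have "Y = insert s (Y - {s})" "Y - {s} \<in> {Y\<in>Pow (\<Lambda> - {s}). S \<subseteq> Y}" using s by auto
      then show "Y \<in> insert s ` {Y\<in>Pow (\<Lambda> - {s}). S \<subseteq> Y}" by blast
    qed
    show "insert s ` {Y\<in>Pow (\<Lambda> - {s}). S \<subseteq> Y} \<subseteq> {Y\<in>Pow \<Lambda>. insert s S \<subseteq> Y}" using s by auto
  qed
  have inj: "inj_on (insert s) {Y\<in>Pow (\<Lambda> - {s}). S \<subseteq> Y}"
    by (rule inj_on_subset[OF inj_insert]) auto
  have "Pp z W \<Lambda> (insert s S) = (\<Sum>Y\<in>{Y\<in>Pow (\<Lambda> - {s}). S \<subseteq> Y}. (\<Prod>y\<in>insert s Y. z y) * kappa W (insert s Y))"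
    unfolding Pp_def e sum.reindex[OF inj] o_def by (rule refl)
  also have "\<dots> = (\<Sum>Y\<in>{Y\<in>Pow (\<Lambda> - {s}). S \<subseteq> Y}. z s * W {s} * ((\<Prod>y\<in>Y. z y) * kappa (absW s (Pow (\<Lambda> - {s})) W) Y))"
  proof (rule sum.cong[OF refl])
    fix Y assume Y: "Y \<in> {Y\<in>Pow (\<Lambda> - {s}). S \<subseteq> Y}"
    then have fY: "finite Y" "s \<notin> Y" "Pow Y \<subseteq> Pow (\<Lambda> - {s})" using fin finite_subset by auto
    show "(\<Prod>y\<in>insert s Y. z y) * kappa W (insert s Y) = z s * W {s} * ((\<Prod>y\<in>Y. z y) * kappa (absW s (Pow (\<Lambda> - {s})) W) Y)"
      using kappa_insert[OF fY] fY by (simp add: algebra_simps)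
  qed
  finally show ?thesis unfolding Pp_def by (simp add: sum_distrib_left)
qed

lemma absW_insertA:
  assumes "T \<notin> A" "T \<noteq> {}"
  shows "absW x (insert T A) W U = absW x A W U * (if U = T then W (insert x T) else 1)"
  unfolding absW_def using assms by auto

lemma kappa_absW_insertA:
  assumes "T \<notin> A" "T \<noteq> {}" "finite Y"
  shows "kappa (absW x (insert T A) W) Y = kappa (absW x A W) Y * (if T \<subseteq> Y then W (insert x T) else 1)"
  unfolding kappa_def absW_insertA[OF assms(1,2)] prod.distrib
  using assms by (subst prod.delta) auto

lemma Zpart_absW_insertA:
  assumes "T \<notin> A" "T \<noteq> {}" "finite \<Lambda>"
  shows "Zpart z (absW x (insert T A) W) \<Lambda> = Zpart z (absW x A W) \<Lambda> + (W (insert x T) - 1) * Pp z (absW x A W) \<Lambda> T"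
proof -
  have "Zpart z (absW x (insert T A) W) \<Lambda> = (\<Sum>Y\<in>Pow \<Lambda>. (\<Prod>y\<in>Y. z y) * kappa (absW x A W) Y
      + (if T \<subseteq> Y then (W (insert x T) - 1) * ((\<Prod>y\<in>Y. z y) * kappa (absW x A W) Y) else 0))"
    unfolding Zpart_def
  proof (rule sum.cong[OF refl])
    fix Y assume "Y \<in> Pow \<Lambda>"
    then have "finite Y" using assms finite_subset by auto
    then show "(\<Prod>y\<in>Y. z y) * kappa (absW x (insert T A) W) Y = (\<Prod>y\<in>Y. z y) * kappa (absW x A W) Y
      + (if T \<subseteq> Y then (W (insert x T) - 1) * ((\<Prod>y\<in>Y. z y) * kappa (absW x A W) Y) else 0)"
      using kappa_absW_insertA[OF assms(1,2)] by (simp add: algebra_simps)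
  qed
  also have "\<dots> = Zpart z (absW x A W) \<Lambda> + (W (insert x T) - 1) * Pp z (absW x A W) \<Lambda> T"
    unfolding Zpart_def Pp_def sum.distrib sum_distrib_left using assms(3)
    by (subst sum.inter_filter) (auto intro!: sum.cong)
  finally show ?thesis .
qed


definition alph :: "('a \<Rightarrow> real) \<Rightarrow> 'a \<Rightarrow> real" where
  "alph r = (\<lambda>y. r y / (1 - r y))"

definition Cond :: "('a \<Rightarrow> real) \<Rightarrow> ('a \<Rightarrow> complex) \<Rightarrow> ('a set \<Rightarrow> complex) \<Rightarrow> 'a set \<Rightarrow> bool" where
  "Cond r z W \<Lambda> \<longleftrightarrow> (\<forall>y\<in>\<Lambda>. cmod (z y) * (\<Prod>T\<in>{T\<in>Pow \<Lambda>. y \<in> T}. max_factor W (alph r) y T) \<le> r y)"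

definition Good :: "('a \<Rightarrow> real) \<Rightarrow> nat \<Rightarrow> bool" where
  "Good r N \<longleftrightarrow> (\<forall>(W::'a set \<Rightarrow> complex) z \<Lambda> x. finite \<Lambda> \<and> card \<Lambda> \<le> N \<and> Cond r z W \<Lambda> \<and> x \<in> \<Lambda> \<longrightarrow>
      cmod (Zpinned z W x (\<Lambda> - {x})) \<le> r x * cmod (Zpart z W (\<Lambda> - {x})))"

lemma alph_nonneg: "(\<And>x. 0 \<le> r x \<and> r x < 1) \<Longrightarrow> 0 \<le> alph r s"
  unfolding alph_def by (metis diff_ge_0_iff_ge divide_nonneg_nonneg less_eq_real_def)

lemma Cond_abs:
  assumes rr: "\<And>x. 0 \<le> r x \<and> r x < 1" and fin: "finite \<Lambda>" and x: "x \<notin> \<Lambda>"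
    and C: "Cond r z W (insert x \<Lambda>)"
  shows "Cond r z (absW x A W) \<Lambda>"
  unfolding Cond_def
proof
  fix y assume y: "y \<in> \<Lambda>"
  let ?f = "max_factor W (alph r) y"
  let ?g = "max_factor (absW x A W) (alph r) y"
  define Ay where "Ay = {T\<in>Pow \<Lambda>. y \<in> T}"
  have fAy: "finite Ay" unfolding Ay_def using fin by auto
  have e: "{T\<in>Pow (insert x \<Lambda>). y \<in> T} = Ay \<union> insert x ` Ay"
  proof
    show "{T\<in>Pow (insert x \<Lambda>). y \<in> T} \<subseteq> Ay \<union> insert x ` Ay"
    proof
      fix T assume T: "T \<in> {T\<in>Pow (insert x \<Lambda>). y \<in> T}"
      show "T \<in> Ay \<union> insert x ` Ay"
      proof (cases "x \<in> T")
        case True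
        then have "T = insert x (T - {x})" "T - {x} \<in> Ay" using T y x unfolding Ay_def by auto
        then show ?thesis by blast
      next
        case False
        then show ?thesis using T unfolding Ay_def by auto
      qed
    qed
    show "Ay \<union> insert x ` Ay \<subseteq> {T\<in>Pow (insert x \<Lambda>). y \<in> T}" unfolding Ay_def by auto
  qed
  have d: "Ay \<inter> insert x ` Ay = {}" unfolding Ay_def using x by auto
  have inj: "inj_on (insert x) Ay" unfolding Ay_def by (rule inj_on_subset[OF inj_insert]) (use x in auto)
  have P: "(\<Prod>T\<in>{T\<in>Pow (insert x \<Lambda>). y \<in> T}. ?f T) = (\<Prod>T\<in>Ay. ?f T * ?f (insert x T))"
    unfolding e using fAy d by (simp add: prod.union_disjoint prod.reindex[OF inj] prod.distrib)
  have le: "(\<Prod>T\<in>Ay. ?g T) \<le> (\<Prod>T\<in>Ay. ?f T * ?f (insert x T))"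
  proof (rule prod_mono)
    fix T assume T: "T \<in> Ay"
    then have fT: "finite T" and xT: "x \<notin> T" and yT: "y \<in> T" unfolding Ay_def using fin x finite_subset by auto
    show "0 \<le> ?g T \<and> ?g T \<le> ?f T * ?f (insert x T)"
    proof
      show "0 \<le> ?g T" by (rule mf_nonneg[OF fT])
      show "?g T \<le> ?f T * ?f (insert x T)"
      proof (cases "T \<in> A \<and> T \<noteq> {}")
        case True
        then show ?thesis by (intro mf_mult[OF fT alph_nonneg[OF rr]]) (simp add: absW_def)
      next
        case False
        then have "absW x A W T = W T" unfolding absW_def by (rule if_not_P)
        then have "?g T = ?f T" unfolding max_factor_def by simp
        moreover have "1 \<le> ?f (insert x T)"
          by (rule mf_ge_1) (use fT alph_nonneg[OF rr] y x in auto)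
        ultimately show ?thesis using mf_nonneg[OF fT, of W "alph r" y]
          by (metis mult_left_mono mult.right_neutral)
      qed
    qed
  qed
  have "cmod (z y) * (\<Prod>T\<in>Ay. ?g T) \<le> cmod (z y) * (\<Prod>T\<in>{T\<in>Pow (insert x \<Lambda>). y \<in> T}. ?f T)"
    unfolding P by (rule mult_left_mono[OF le norm_ge_zero])
  also have "\<dots> \<le> r y" using C y unfolding Cond_def by auto
  finally show "cmod (z y) * (\<Prod>T\<in>{T\<in>Pow \<Lambda>. y \<in> T}. ?g T) \<le> r y" unfolding Ay_def .
qed

lemma Pp_bound:
  assumes rr: "\<And>x. 0 \<le> r x \<and> r x < 1" and G: "Good r N" and S: "finite S"
  shows "finite \<Lambda> \<Longrightarrow> card \<Lambda> \<le> N \<Longrightarrow> Cond r z W \<Lambda> \<Longrightarrow> S \<subseteq> \<Lambda> \<Longrightarrow>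
     cmod (Pp z W \<Lambda> S) \<le> (\<Prod>s\<in>S. alph r s) * cmod (Zpart z W \<Lambda>)"
  using S
proof (induction S arbitrary: \<Lambda> W rule: finite_induct)
  case empty
  then show ?case by (simp add: Pp_empty)
next
  case (insert s S)
  define \<Lambda>0 where "\<Lambda>0 = \<Lambda> - {s}"
  define W' where "W' = absW s (Pow \<Lambda>0) W"
  have s: "s \<in> \<Lambda>" using insert by auto
  have L: "\<Lambda> = insert s \<Lambda>0" unfolding \<Lambda>0_def using s by auto
  have f0: "finite \<Lambda>0" "s \<notin> \<Lambda>0" unfolding \<Lambda>0_def using insert by auto
  have c0: "card \<Lambda>0 \<le> N" unfolding \<Lambda>0_def using insert by (meson card_Diff1_le le_trans)
  have C0: "Cond r z W' \<Lambda>0" unfolding W'_def by (rule Cond_abs[OF rr f0]) (use insert L in auto)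
  have IH: "cmod (Pp z W' \<Lambda>0 S) \<le> (\<Prod>s\<in>S. alph r s) * cmod (Zpart z W' \<Lambda>0)"
    by (rule insert.IH[OF f0(1) c0 C0]) (use insert in \<open>auto simp: \<Lambda>0_def\<close>)
  have Pe: "Pp z W \<Lambda> (insert s S) = z s * W {s} * Pp z W' \<Lambda>0 S"
    unfolding W'_def \<Lambda>0_def by (rule Pp_insert) (use insert in auto)
  have Ze: "Zpinned z W s \<Lambda>0 = z s * W {s} * Zpart z W' \<Lambda>0"
    unfolding W'_def by (rule Zpinned_abs[OF f0]) auto
  have Zi: "Zpart z W \<Lambda> = Zpart z W \<Lambda>0 + Zpinned z W s \<Lambda>0"
    unfolding L by (rule Zpart_insert[OF f0])
  have Gs: "cmod (Zpinned z W s \<Lambda>0) \<le> r s * cmod (Zpart z W \<Lambda>0)"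
    using G insert s unfolding Good_def \<Lambda>0_def by blast
  have rs: "0 \<le> r s" "r s < 1" using rr by auto
  have low: "(1 - r s) * cmod (Zpart z W \<Lambda>0) \<le> cmod (Zpart z W \<Lambda>)"
  proof -
    have "cmod (Zpart z W \<Lambda>0) \<le> cmod (Zpart z W \<Lambda>) + cmod (Zpinned z W s \<Lambda>0)"
    proof -
      have "Zpart z W \<Lambda>0 = Zpart z W \<Lambda> - Zpinned z W s \<Lambda>0" unfolding Zi by simp
      then show ?thesis using norm_triangle_ineq4[of "Zpart z W \<Lambda>" "Zpinned z W s \<Lambda>0"] by simp
    qed
    then show ?thesis using Gs by (simp add: algebra_simps)
  qed
  have Zp: "cmod (Zpinned z W s \<Lambda>0) \<le> alph r s * cmod (Zpart z W \<Lambda>)"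
  proof -
    have "cmod (Zpinned z W s \<Lambda>0) * (1 - r s) \<le> r s * ((1 - r s) * cmod (Zpart z W \<Lambda>0))"
      using mult_right_mono[OF Gs, of "1 - r s"] rs by (simp add: algebra_simps)
    also have "\<dots> \<le> r s * cmod (Zpart z W \<Lambda>)" using mult_left_mono[OF low rs(1)] .
    finally have "cmod (Zpinned z W s \<Lambda>0) * (1 - r s) \<le> r s * cmod (Zpart z W \<Lambda>)" .
    then show ?thesis unfolding alph_def using rs by (simp add: field_simps)
  qed
  have "cmod (Pp z W \<Lambda> (insert s S)) = cmod (z s * W {s}) * cmod (Pp z W' \<Lambda>0 S)"
    unfolding Pe norm_mult by simp
  also have "\<dots> \<le> cmod (z s * W {s}) * ((\<Prod>s\<in>S. alph r s) * cmod (Zpart z W' \<Lambda>0))"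
    by (rule mult_left_mono[OF IH norm_ge_zero])
  also have "\<dots> = (\<Prod>s\<in>S. alph r s) * cmod (Zpinned z W s \<Lambda>0)"
    unfolding Ze norm_mult by (simp add: algebra_simps)
  also have "\<dots> \<le> (\<Prod>s\<in>S. alph r s) * (alph r s * cmod (Zpart z W \<Lambda>))"
    by (rule mult_left_mono[OF Zp]) (simp add: prod_nonneg alph_nonneg[OF rr])
  also have "\<dots> = (\<Prod>s\<in>insert s S. alph r s) * cmod (Zpart z W \<Lambda>)"
    using insert by (simp add: algebra_simps)
  finally show ?case .
qed


lemma Tele:
  assumes rr: "\<And>x. 0 \<le> r x \<and> r x < 1" and G: "Good r N"
    and fin: "finite \<Lambda>0" and c0: "card \<Lambda>0 \<le> N" and x: "x \<notin> \<Lambda>0"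
    and C: "Cond r z W (insert x \<Lambda>0)" and A: "A \<subseteq> Pow \<Lambda>0 - {{}}"
  shows "cmod (Zpart z (absW x A W) \<Lambda>0) \<le> (\<Prod>T\<in>A. max_factor W (alph r) x (insert x T)) * cmod (Zpart z W \<Lambda>0)"
proof -
  have fA: "finite A" using A fin by (meson finite_Diff finite_Pow_iff finite_subset)
  show ?thesis using fA A
  proof (induction A rule: finite_induct)
    case empty
    have "absW x {} W = W" unfolding absW_def by auto
    then show ?case by simp
  next
    case (insert T A)
    have T: "T \<notin> A" "T \<noteq> {}" "T \<subseteq> \<Lambda>0" using insert by auto
    let ?WA = "absW x A W"
    have e: "Zpart z (absW x (insert T A) W) \<Lambda>0 = Zpart z ?WA \<Lambda>0 + (W (insert x T) - 1) * Pp z ?WA \<Lambda>0 T"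
      by (rule Zpart_absW_insertA[OF T(1,2) fin])
    have CA: "Cond r z ?WA \<Lambda>0" by (rule Cond_abs[OF rr fin x C])
    have PB: "cmod (Pp z ?WA \<Lambda>0 T) \<le> (\<Prod>s\<in>T. alph r s) * cmod (Zpart z ?WA \<Lambda>0)"
      by (rule Pp_bound[OF rr G _ fin c0 CA T(3)]) (use T(3) fin finite_subset in blast)
    have mfT: "1 + cmod (W (insert x T) - 1) * (\<Prod>s\<in>T. alph r s) \<le> max_factor W (alph r) x (insert x T)"
      by (rule mf_ge_S) (use T x fin finite_subset in auto)
    have "cmod (Zpart z (absW x (insert T A) W) \<Lambda>0) \<le> cmod (Zpart z ?WA \<Lambda>0) + cmod (W (insert x T) - 1) * cmod (Pp z ?WA \<Lambda>0 T)"
      unfolding e by (metis norm_mult norm_triangle_ineq)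
    also have "\<dots> \<le> cmod (Zpart z ?WA \<Lambda>0) + cmod (W (insert x T) - 1) * ((\<Prod>s\<in>T. alph r s) * cmod (Zpart z ?WA \<Lambda>0))"
      using mult_left_mono[OF PB norm_ge_zero] by simp
    also have "\<dots> = (1 + cmod (W (insert x T) - 1) * (\<Prod>s\<in>T. alph r s)) * cmod (Zpart z ?WA \<Lambda>0)"
      by (simp add: algebra_simps)
    also have "\<dots> \<le> max_factor W (alph r) x (insert x T) * cmod (Zpart z ?WA \<Lambda>0)"
      by (rule mult_right_mono[OF mfT norm_ge_zero])
    also have "\<dots> \<le> max_factor W (alph r) x (insert x T) * ((\<Prod>T\<in>A. max_factor W (alph r) x (insert x T)) * cmod (Zpart z W \<Lambda>0))"
    proof (rule mult_left_mono)
      have "finite T" using T(3) fin finite_subset by blast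
      then show "0 \<le> max_factor W (alph r) x (insert x T)" by (intro mf_nonneg) simp
    qed (use insert in auto)
    also have "\<dots> = (\<Prod>T\<in>insert T A. max_factor W (alph r) x (insert x T)) * cmod (Zpart z W \<Lambda>0)"
      using insert by (simp add: algebra_simps)
    finally show ?case .
  qed
qed

lemma Good_step:
  assumes rr: "\<And>x. 0 \<le> r x \<and> r x < 1" and G: "Good r N"
  shows "Good r (Suc N)"
  unfolding Good_def
proof (intro allI impI, elim conjE)
  fix W :: "'a set \<Rightarrow> complex" and z \<Lambda> x
  assume fin: "finite \<Lambda>" and c: "card \<Lambda> \<le> Suc N" and C: "Cond r z W \<Lambda>" and x: "x \<in> \<Lambda>"
  define \<Lambda>0 where "\<Lambda>0 = \<Lambda> - {x}"
  have L: "\<Lambda> = insert x \<Lambda>0" unfolding \<Lambda>0_def using x by auto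
  have f0: "finite \<Lambda>0" "x \<notin> \<Lambda>0" unfolding \<Lambda>0_def using fin by auto
  have c0: "card \<Lambda>0 \<le> N" unfolding \<Lambda>0_def using c x fin by simp
  let ?f = "max_factor W (alph r) x"
  have T: "cmod (Zpart z (absW x (Pow \<Lambda>0 - {{}}) W) \<Lambda>0) \<le> (\<Prod>T\<in>Pow \<Lambda>0 - {{}}. ?f (insert x T)) * cmod (Zpart z W \<Lambda>0)"
    by (rule Tele[OF rr G f0(1) c0 f0(2)]) (use C L in auto)
  have ab: "absW x (Pow \<Lambda>0 - {{}}) W = absW x (Pow \<Lambda>0) W" unfolding absW_def by auto
  have Ze: "Zpinned z W x \<Lambda>0 = z x * W {x} * Zpart z (absW x (Pow \<Lambda>0) W) \<Lambda>0"
    by (rule Zpinned_abs[OF f0]) auto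
  have e1: "{T\<in>Pow \<Lambda>. x \<in> T} = insert x ` Pow \<Lambda>0"
  proof
    show "{T\<in>Pow \<Lambda>. x \<in> T} \<subseteq> insert x ` Pow \<Lambda>0"
    proof
      fix T assume "T \<in> {T\<in>Pow \<Lambda>. x \<in> T}"
      then have "T = insert x (T - {x})" "T - {x} \<in> Pow \<Lambda>0" unfolding \<Lambda>0_def by auto
      then show "T \<in> insert x ` Pow \<Lambda>0" by blast
    qed
    show "insert x ` Pow \<Lambda>0 \<subseteq> {T\<in>Pow \<Lambda>. x \<in> T}" using L by auto
  qed
  have e2: "Pow \<Lambda>0 = insert {} (Pow \<Lambda>0 - {{}})" by auto
  have P: "(\<Prod>T\<in>{T\<in>Pow \<Lambda>. x \<in> T}. ?f T) = cmod (W {x}) * (\<Prod>T\<in>Pow \<Lambda>0 - {{}}. ?f (insert x T))"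
  proof -
    have "(\<Prod>T\<in>{T\<in>Pow \<Lambda>. x \<in> T}. ?f T) = (\<Prod>T\<in>Pow \<Lambda>0. ?f (insert x T))"
      unfolding e1 by (simp add: prod.reindex[OF inj_insert'[OF f0(2)]])
    also have "\<dots> = ?f (insert x {}) * (\<Prod>T\<in>Pow \<Lambda>0 - {{}}. ?f (insert x T))"
      by (subst e2, subst prod.insert) (use f0 in auto)
    finally show ?thesis by (simp add: mf_singleton)
  qed
  have "cmod (Zpinned z W x \<Lambda>0) = cmod (z x) * cmod (W {x}) * cmod (Zpart z (absW x (Pow \<Lambda>0 - {{}}) W) \<Lambda>0)"
    unfolding Ze ab norm_mult by simp
  also have "\<dots> \<le> cmod (z x) * cmod (W {x}) * ((\<Prod>T\<in>Pow \<Lambda>0 - {{}}. ?f (insert x T)) * cmod (Zpart z W \<Lambda>0))"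
    by (rule mult_left_mono[OF T]) simp
  also have "\<dots> = (cmod (z x) * (\<Prod>T\<in>{T\<in>Pow \<Lambda>. x \<in> T}. ?f T)) * cmod (Zpart z W \<Lambda>0)"
    unfolding P by (simp add: algebra_simps)
  also have "\<dots> \<le> r x * cmod (Zpart z W \<Lambda>0)"
    by (rule mult_right_mono) (use C x in \<open>auto simp: Cond_def\<close>)
  finally show "cmod (Zpinned z W x (\<Lambda> - {x})) \<le> r x * cmod (Zpart z W (\<Lambda> - {x}))"
    unfolding \<Lambda>0_def .
qed

lemma Good_all:
  assumes rr: "\<And>x. 0 \<le> r x \<and> r x < 1"
  shows "Good r N"
proof (induction N)
  case 0
  then show ?case unfolding Good_def by auto
next
  case (Suc N)
  then show ?case by (rule Good_step[OF rr])
qed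


lemma ennprod_ge:
  fixes f :: "'b \<Rightarrow> ennreal"
  assumes FD: "F \<subseteq> D" and fF: "finite F" and one: "\<And>b. b \<in> D - F \<Longrightarrow> 1 \<le> f b"
  shows "(\<Prod>b\<in>F. f b) \<le> ennprod f D"
proof -
  let ?g = "\<lambda>G. \<Prod>b\<in>G. f b"
  let ?I = "{G. finite G \<and> F \<subseteq> G \<and> G \<subseteq> D}"
  define L where "L = (SUP G\<in>?I. ?g G)"
  have mono: "?g G \<le> ?g G'" if "F \<subseteq> G" "G \<subseteq> G'" "G' \<subseteq> D" "finite G'" for G G'
  proof -
    have "?g G' = ?g (G' - G) * ?g G" by (rule prod.subset_diff) (use that in auto)
    moreover have "1 \<le> ?g (G' - G)" by (rule prod_ge_1) (use that one in auto)
    ultimately show ?thesis by (metis mult_right_mono mult_1 zero_le)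
  qed
  have lim: "(?g \<longlongrightarrow> L) (finite_subsets_at_top D)"
  proof (rule order_tendstoI)
    fix a assume "a < L"
    then obtain G0 where G0: "G0 \<in> ?I" "a < ?g G0" unfolding L_def by (auto simp: less_SUP_iff)
    show "eventually (\<lambda>G. a < ?g G) (finite_subsets_at_top D)"
      unfolding eventually_finite_subsets_at_top
      by (rule exI[of _ G0]) (use G0 mono in \<open>auto intro: less_le_trans\<close>)
  next
    fix a assume "L < a"
    show "eventually (\<lambda>G. ?g G < a) (finite_subsets_at_top D)"
      unfolding eventually_finite_subsets_at_top
    proof (rule exI[of _ F], intro conjI allI impI)
      fix Y assume "finite Y \<and> F \<subseteq> Y \<and> Y \<subseteq> D"
      then have "?g Y \<le> L" unfolding L_def by (intro SUP_upper) auto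
      then show "?g Y < a" using \<open>L < a\<close> by auto
    qed (use fF FD in auto)
  qed
  have "ennprod f D = L" unfolding ennprod_def
    by (rule tendsto_Lim[OF _ lim]) (simp add: finite_subsets_at_top_neq_bot)
  moreover have "?g F \<le> L" unfolding L_def by (rule SUP_upper) (use fF FD in auto)
  ultimately show ?thesis by simp
qed

theorem theorem2p1:
  fixes z :: "'a::countable \<Rightarrow> complex"
    and W :: "'a set \<Rightarrow> complex"
    and r :: "'a \<Rightarrow> real"
  assumes r_range: "\<And>x. 0 \<le> r x \<and> r x < 1"
    and cond: "\<And>x. ennreal (cmod (z x)) *
        ennprod (\<lambda>X. ennreal (max_factor W (\<lambda>y. r y / (1 - r y)) x X)) {X. finite X \<and> x \<in> X}
        \<le> ennreal (r x)"
  shows "(\<forall>\<Lambda>. finite \<Lambda> \<longrightarrow> Zpart z W \<Lambda> \<noteq> 0)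
    \<and> (\<forall>x. (SUP \<Lambda>\<in>{\<Lambda>. finite \<Lambda> \<and> x \<notin> \<Lambda>}. ennreal (cmod (eff_act z W x \<Lambda>))) \<le> ennreal (r x)
           \<and> r x < 1)
    \<and> (\<forall>\<Lambda>. finite \<Lambda> \<longrightarrow>
          0 < (\<Prod>y\<in>\<Lambda>. 1 - r y)
        \<and> (\<Prod>y\<in>\<Lambda>. 1 - r y) \<le> cmod (Zpart z W \<Lambda>)
        \<and> cmod (Zpart z W \<Lambda>) \<le> (\<Prod>y\<in>\<Lambda>. 1 + r y))"
proof -
  have CondAll: "Cond r z W \<Lambda>" if fin: "finite \<Lambda>" for \<Lambda>
    unfolding Cond_def
  proof (rule ballI)
    fix y assume y: "y \<in> \<Lambda>"
    let ?f = "\<lambda>X. max_factor W (alph r) y X"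
    let ?F = "{T\<in>Pow \<Lambda>. y \<in> T}"
    have fF: "finite ?F" using fin by auto
    have nn: "\<And>T. T \<in> ?F \<Longrightarrow> 0 \<le> ?f T" using fin finite_subset by (blast intro: mf_nonneg)
    have pe: "(\<Prod>T\<in>?F. ennreal (?f T)) = ennreal (\<Prod>T\<in>?F. ?f T)"
      by (rule prod_ennreal) (rule nn)
    have "(\<Prod>T\<in>?F. ennreal (?f T)) \<le> ennprod (\<lambda>X. ennreal (?f X)) {X. finite X \<and> y \<in> X}"
    proof (rule ennprod_ge)
      show "?F \<subseteq> {X. finite X \<and> y \<in> X}" using fin finite_subset by auto
      show "finite ?F" by (rule fF)
      fix b assume b: "b \<in> {X. finite X \<and> y \<in> X} - ?F"
      then have "b \<noteq> {y}" using y by auto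
      then have "b - {y} \<noteq> {}" using b by auto
      then have "1 \<le> ?f b" using b by (intro mf_ge_1 alph_nonneg[OF r_range]) auto
      then show "1 \<le> ennreal (?f b)" using ennreal_leI by fastforce
    qed
    then have h1: "ennreal (\<Prod>T\<in>?F. ?f T) \<le> ennprod (\<lambda>X. ennreal (?f X)) {X. finite X \<and> y \<in> X}"
      by (simp only: pe)
    have h2: "ennreal (cmod (z y)) * ennprod (\<lambda>X. ennreal (?f X)) {X. finite X \<and> y \<in> X} \<le> ennreal (r y)"
      using cond[of y] unfolding alph_def .
    have "ennreal (cmod (z y)) * ennreal (\<Prod>T\<in>?F. ?f T) \<le> ennreal (r y)"
      by (rule order_trans[OF mult_left_mono[OF h1 zero_le] h2])
    then have "ennreal (cmod (z y) * (\<Prod>T\<in>?F. ?f T)) \<le> ennreal (r y)"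
      by (simp only: ennreal_mult'[OF norm_ge_zero])
    then show "cmod (z y) * (\<Prod>T\<in>?F. ?f T) \<le> r y"
      using r_range[of y] ennreal_le_iff by blast
  qed
  have G: "cmod (Zpinned z W x \<Lambda>) \<le> r x * cmod (Zpart z W \<Lambda>)" if "finite \<Lambda>" "x \<notin> \<Lambda>" for x \<Lambda>
  proof -
    have "Good r (card (insert x \<Lambda>))" by (rule Good_all[OF r_range])
    then have "cmod (Zpinned z W x (insert x \<Lambda> - {x})) \<le> r x * cmod (Zpart z W (insert x \<Lambda> - {x}))"
      unfolding Good_def using that CondAll[of "insert x \<Lambda>"] by blast
    then show ?thesis using that by simp
  qed
  have B: "(\<Prod>y\<in>\<Lambda>. 1 - r y) \<le> cmod (Zpart z W \<Lambda>) \<and> cmod (Zpart z W \<Lambda>) \<le> (\<Prod>y\<in>\<Lambda>. 1 + r y)"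
    if "finite \<Lambda>" for \<Lambda>
    using that
  proof (induction \<Lambda> rule: finite_induct)
    case empty
    then show ?case by (simp add: Zpart_empty)
  next
    case (insert x \<Lambda>)
    have e: "Zpart z W (insert x \<Lambda>) = Zpart z W \<Lambda> + Zpinned z W x \<Lambda>" by (rule Zpart_insert) (use insert in auto)
    have g: "cmod (Zpinned z W x \<Lambda>) \<le> r x * cmod (Zpart z W \<Lambda>)" by (rule G) (use insert in auto)
    have rx: "0 \<le> r x" "r x < 1" using r_range by auto
    have lo: "(1 - r x) * cmod (Zpart z W \<Lambda>) \<le> cmod (Zpart z W (insert x \<Lambda>))"
    proof -
      have "Zpart z W \<Lambda> = Zpart z W (insert x \<Lambda>) - Zpinned z W x \<Lambda>" using e by simp
      then have "cmod (Zpart z W \<Lambda>) \<le> cmod (Zpart z W (insert x \<Lambda>)) + cmod (Zpinned z W x \<Lambda>)"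
        using norm_triangle_ineq4[of "Zpart z W (insert x \<Lambda>)" "Zpinned z W x \<Lambda>"] by simp
      then show ?thesis using g by (simp add: algebra_simps)
    qed
    have hi: "cmod (Zpart z W (insert x \<Lambda>)) \<le> (1 + r x) * cmod (Zpart z W \<Lambda>)"
      using e g norm_triangle_ineq[of "Zpart z W \<Lambda>" "Zpinned z W x \<Lambda>"] by (simp add: algebra_simps)
    have p1: "0 \<le> (\<Prod>y\<in>\<Lambda>. 1 - r y)" using r_range by (simp add: prod_nonneg less_imp_le)
    have "(\<Prod>y\<in>insert x \<Lambda>. 1 - r y) = (1 - r x) * (\<Prod>y\<in>\<Lambda>. 1 - r y)" using insert by simp
    also have "\<dots> \<le> (1 - r x) * cmod (Zpart z W \<Lambda>)" using insert.IH rx by (intro mult_left_mono) auto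
    also have "\<dots> \<le> cmod (Zpart z W (insert x \<Lambda>))" by (rule lo)
    finally have L1: "(\<Prod>y\<in>insert x \<Lambda>. 1 - r y) \<le> cmod (Zpart z W (insert x \<Lambda>))" .
    have "cmod (Zpart z W (insert x \<Lambda>)) \<le> (1 + r x) * cmod (Zpart z W \<Lambda>)" by (rule hi)
    also have "\<dots> \<le> (1 + r x) * (\<Prod>y\<in>\<Lambda>. 1 + r y)" using insert.IH rx by (intro mult_left_mono) auto
    also have "\<dots> = (\<Prod>y\<in>insert x \<Lambda>. 1 + r y)" using insert by simp
    finally show ?case using L1 by simp
  qed
  have pos: "0 < (\<Prod>y\<in>\<Lambda>. 1 - r y)" for \<Lambda>
    using r_range by (intro prod_pos) (simp add: algebra_simps)
  have nz: "Zpart z W \<Lambda> \<noteq> 0" if "finite \<Lambda>" for \<Lambda>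
    using B[OF that] pos[of \<Lambda>] by auto
  have S: "(SUP \<Lambda>\<in>{\<Lambda>. finite \<Lambda> \<and> x \<notin> \<Lambda>}. ennreal (cmod (eff_act z W x \<Lambda>))) \<le> ennreal (r x)" for x
  proof (rule SUP_least)
    fix \<Lambda> assume "\<Lambda> \<in> {\<Lambda>. finite \<Lambda> \<and> x \<notin> \<Lambda>}"
    then have f: "finite \<Lambda>" "x \<notin> \<Lambda>" by auto
    have p: "0 < cmod (Zpart z W \<Lambda>)" using nz[OF f(1)] by simp
    have "cmod (eff_act z W x \<Lambda>) = cmod (Zpinned z W x \<Lambda>) / cmod (Zpart z W \<Lambda>)"
      unfolding eff_act_def by (simp add: norm_divide)
    also have "\<dots> \<le> r x" using G[OF f] p by (simp add: divide_le_eq)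
    finally show "ennreal (cmod (eff_act z W x \<Lambda>)) \<le> ennreal (r x)" by (rule ennreal_leI)
  qed
  show ?thesis using nz S B pos r_range by blast
qed

end
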